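(* Assume (A5). Let $0<d<d'<1$, $b_n=\exp(-n^d)$, $c_n=\exp(-n^{d'})$, and let $x_1,x_2,\dots$ be i.i.d. with density $f(\cdot;\theta_0)$ for some $\theta_0\in\Theta$. Then almost surely $$\lim_{n\to\infty}\ \sup_{\theta\in\Theta_{b_n}\cap\Theta_{c_n}^C}\frac1n\sum_{i=1}^n\log f(x_i;\theta)=-\infty.$$
   Context: The model is $f(x;\theta)=\sum_{m=1}^M\alpha_m f_m(x;\mu_m,\sigma_m)$ with $f_m(x;\mu_m,\sigma_m)=\frac1{\sigma_m}f_m(\frac{x-\mu_m}{\sigma_m};0,1)$ location-scale densities on $\mathbb{R}$; $\Theta$ is the set of all $\theta=(\alpha_1,\mu_1,\sigma_1,\dots,\alpha_M,\mu_M,\sigma_M)$ with $\alpha_m\ge0$, $\sum_m\alpha_m=1$, $\mu_m\in\mathbb{R}$, $\sigma_m>0$. (A5): constants $v_0,v_1>0$, $\beta>2$ with $f_m(x;0,1)\le\min\{v_0,v_1|x|^{-\beta}\}$ for all $x,m$. $\Theta_{b_n}=\{\theta\in\Theta:\min_{1\le m\ne m'\le M}\sigma_m/\sigma_{m'}\ge b_n\}$, $\Theta_{c_n}=\{\theta\in\Theta:\min_{1\le m\le M}\sigma_m\ge c_n\}$, $\Theta_{c_n}^C=\Theta\setminus\Theta_{c_n}$. *)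

theory Defs
  imports "HOL-Probability.Probability"
begin

text \<open>Components are indexed by m < M (i.e. 0..M-1). A parameter theta is a triple
 (alpha, mu, sigma) of functions on indices; only the values at m < M matter.\<close>

definition mixdens :: "nat \<Rightarrow> (nat \<Rightarrow> real \<Rightarrow> real) \<Rightarrow>
    (nat \<Rightarrow> real) \<times> (nat \<Rightarrow> real) \<times> (nat \<Rightarrow> real) \<Rightarrow> real \<Rightarrow> real" where
  "mixdens M g \<theta> x = (case \<theta> of (\<alpha>, \<mu>, \<sigma>) \<Rightarrow>
      (\<Sum>m<M. \<alpha> m * ((1 / \<sigma> m) * g m ((x - \<mu> m) / \<sigma> m))))"

definition Theta :: "nat \<Rightarrow> ((nat \<Rightarrow> real) \<times> (nat \<Rightarrow> real) \<times> (nat \<Rightarrow> real)) set" where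
  "Theta M = {(\<alpha>, \<mu>, \<sigma>). (\<forall>m<M. \<alpha> m \<ge> 0 \<and> \<sigma> m > 0) \<and> (\<Sum>m<M. \<alpha> m) = 1}"

definition Theta_b :: "nat \<Rightarrow> real \<Rightarrow> ((nat \<Rightarrow> real) \<times> (nat \<Rightarrow> real) \<times> (nat \<Rightarrow> real)) set" where
  "Theta_b M b = {(\<alpha>, \<mu>, \<sigma>) \<in> Theta M.
      \<forall>m<M. \<forall>m'<M. m \<noteq> m' \<longrightarrow> \<sigma> m / \<sigma> m' \<ge> b}"

definition Theta_c :: "nat \<Rightarrow> real \<Rightarrow> ((nat \<Rightarrow> real) \<times> (nat \<Rightarrow> real) \<times> (nat \<Rightarrow> real)) set" where
  "Theta_c M c = {(\<alpha>, \<mu>, \<sigma>) \<in> Theta M. \<forall>m<M. \<sigma> m \<ge> c}"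

text \<open>Average log-likelihood (1/n) sum_{i<n} log f(x_i; theta), valued in the extended
 reals with log 0 = -infinity.\<close>
definition avg_loglik :: "nat \<Rightarrow> (nat \<Rightarrow> real \<Rightarrow> real) \<Rightarrow>
    (nat \<Rightarrow> real) \<times> (nat \<Rightarrow> real) \<times> (nat \<Rightarrow> real) \<Rightarrow> (nat \<Rightarrow> real) \<Rightarrow> nat \<Rightarrow> ereal" where
  "avg_loglik M g \<theta> xs n =
     (if \<forall>i<n. mixdens M g \<theta> (xs i) > 0
      then ereal ((\<Sum>i<n. ln (mixdens M g \<theta> (xs i))) / real n)
      else -\<infinity>)"

end

theory Submission
  imports Defs
begin


lemma pair_close:
  fixes P :: "'w measure" and X :: "nat \<Rightarrow> 'w \<Rightarrow> real" and f :: "real \<Rightarrow> real"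
  assumes P: "prob_space P"
    and indep: "prob_space.indep_vars P (\<lambda>_. borel) X UNIV"
    and distr: "\<And>i. distributed P lborel (X i) (\<lambda>x. ennreal (f x))"
    and fK: "\<And>x. f x \<le> K" and K: "K \<ge> 0"
    and ij: "i \<noteq> j" and e: "\<epsilon> > 0"
  shows "measure P {\<omega>\<in>space P. \<bar>X i \<omega> - X j \<omega>\<bar> < \<epsilon>} \<le> 2 * K * \<epsilon>"
proof -
  interpret prob_space P by (rule P)
  have "indep_var
    borel ((\<lambda>f. f i) \<circ> (\<lambda>\<omega>. restrict (\<lambda>i. X i \<omega>) {i}))
    borel ((\<lambda>f. f j) \<circ> (\<lambda>\<omega>. restrict (\<lambda>i. X i \<omega>) {j}))"
    using ij by (intro indep_var_compose[OF indep_var_restrict[OF indep]]) auto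
  also have "((\<lambda>f. f i) \<circ> (\<lambda>\<omega>. restrict (\<lambda>i. X i \<omega>) {i})) = X i" by auto
  also have "((\<lambda>f. f j) \<circ> (\<lambda>\<omega>. restrict (\<lambda>i. X i \<omega>) {j})) = X j" by auto
  finally have ind: "indep_var borel (X i) borel (X j)" .
  then have rvi: "random_variable borel (X i)" and rvj: "random_variable borel (X j)"
    and eq: "distr P borel (X i) \<Otimes>\<^sub>M distr P borel (X j) = distr P (borel \<Otimes>\<^sub>M borel) (\<lambda>x. (X i x, X j x))"
    unfolding indep_var_distribution_eq by auto
  define D where "D = {p::real\<times>real. \<bar>fst p - snd p\<bar> < \<epsilon>}"
  have Dm: "D \<in> sets (borel \<Otimes>\<^sub>M borel)"
  proof -
    have "Measurable.pred (borel \<Otimes>\<^sub>M borel) (\<lambda>p::real\<times>real. \<bar>fst p - snd p\<bar> < \<epsilon>)"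
      by measurable
    then show ?thesis unfolding D_def pred_def by (simp add: space_pair_measure)
  qed
  interpret Nj: prob_space "distr P borel (X j)" by (rule prob_space_distr[OF rvj])
  interpret Ni: prob_space "distr P borel (X i)" by (rule prob_space_distr[OF rvi])
  have dens: "distr P lborel (X j) = density lborel (\<lambda>x. ennreal (f x))"
    using distributed_distr_eq_density[OF distr] .
  have bnd: "emeasure (distr P borel (X j)) (Pair x -` D) \<le> ennreal (2 * K * \<epsilon>)" for x
  proof -
    have pre: "Pair x -` D = {x - \<epsilon> <..< x + \<epsilon>}" unfolding D_def by auto
    have "emeasure (distr P borel (X j)) (Pair x -` D) = emeasure P (X j -` {x - \<epsilon> <..< x + \<epsilon>} \<inter> space P)"
      using rvj by (simp add: pre emeasure_distr)
    also have "\<dots> = emeasure (distr P lborel (X j)) {x - \<epsilon> <..< x + \<epsilon>}"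
      using rvj by (simp add: emeasure_distr)
    also have "\<dots> = (\<integral>\<^sup>+y. ennreal (f y) * indicator {x - \<epsilon> <..< x + \<epsilon>} y \<partial>lborel)"
      unfolding dens using distributed_borel_measurable[OF distr] by (subst emeasure_density) auto
    also have "\<dots> \<le> (\<integral>\<^sup>+y. ennreal K * indicator {x - \<epsilon> <..< x + \<epsilon>} y \<partial>lborel)"
      by (intro nn_integral_mono) (auto simp: indicator_def fK ennreal_leI)
    also have "\<dots> = ennreal K * ennreal (2 * \<epsilon>)"
      using e by (simp add: nn_integral_cmult_indicator)
    also have "\<dots> = ennreal (2 * K * \<epsilon>)"
      using K e by (simp add: ennreal_mult' mult_ac)
    finally show ?thesis .
  qed
  have "emeasure P {\<omega>\<in>space P. \<bar>X i \<omega> - X j \<omega>\<bar> < \<epsilon>}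
      = emeasure (distr P (borel \<Otimes>\<^sub>M borel) (\<lambda>x. (X i x, X j x))) D"
    using rvi rvj Dm by (subst emeasure_distr) (auto simp: D_def intro!: arg_cong[where f="emeasure P"])
  also have "\<dots> = (\<integral>\<^sup>+x. emeasure (distr P borel (X j)) (Pair x -` D) \<partial>distr P borel (X i))"
    unfolding eq[symmetric] using Dm by (simp add: Nj.emeasure_pair_measure_alt)
  also have "\<dots> \<le> (\<integral>\<^sup>+x. ennreal (2 * K * \<epsilon>) \<partial>distr P borel (X i))"
    by (intro nn_integral_mono bnd)
  also have "\<dots> = ennreal (2 * K * \<epsilon>)"
    using Ni.emeasure_space_1 by simp
  finally show ?thesis
    using K e by (simp add: emeasure_eq_measure)
qed

lemma spacing:
  fixes P :: "'w measure" and X :: "nat \<Rightarrow> 'w \<Rightarrow> real" and f :: "real \<Rightarrow> real"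
  assumes P: "prob_space P"
    and indep: "prob_space.indep_vars P (\<lambda>_. borel) X UNIV"
    and distr: "\<And>i. distributed P lborel (X i) (\<lambda>x. ennreal (f x))"
    and fK: "\<And>x. f x \<le> K" and K: "K \<ge> 0"
  shows "AE \<omega> in P. eventually (\<lambda>n. \<forall>i<n. \<forall>j<n. i \<noteq> j \<longrightarrow> 1 / real n ^ 3 \<le> \<bar>X i \<omega> - X j \<omega>\<bar>) sequentially"
proof -
  interpret prob_space P by (rule P)
  have Xm[measurable]: "X i \<in> borel_measurable P" for i
    using distributed_measurable[OF distr[of i]] by simp
  note pc = pair_close[OF P indep distr fK K]
  have dist1: "AE \<omega> in P. X i \<omega> \<noteq> X j \<omega>" if ij: "i \<noteq> j" for i j
  proof (rule AE_I')
    let ?N = "{\<omega>\<in>space P. X i \<omega> = X j \<omega>}"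
    have Nm: "?N \<in> sets P" by measurable
    have "measure P ?N \<le> 2 * K * e" if e: "e > 0" for e
    proof -
      have "measure P ?N \<le> measure P {\<omega>\<in>space P. \<bar>X i \<omega> - X j \<omega>\<bar> < e}"
        using e by (intro finite_measure_mono) (auto)
      also have "\<dots> \<le> 2 * K * e" by (rule pc[OF ij e])
      finally show ?thesis .
    qed
    then have "measure P ?N \<le> 0"
    proof (cases "K = 0")
      case True then show ?thesis using \<open>\<And>e. e > 0 \<Longrightarrow> _\<close>[of 1] by simp
    next
      case False
      show ?thesis
      proof (rule ccontr)
        assume "\<not> measure P ?N \<le> 0"
        then have pos: "measure P ?N > 0" by simp
        have "measure P ?N \<le> 2 * K * (measure P ?N / (4 * K))"
          using pos K False by (intro \<open>\<And>e. e > 0 \<Longrightarrow> _\<close>) simp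
        also have "\<dots> = measure P ?N / 2" using K False by (simp add: field_simps)
        finally show False using pos by simp
      qed
    qed
    then have "measure P ?N = 0" using measure_nonneg[of P ?N] by linarith
    then show "?N \<in> null_sets P" using Nm by (simp add: null_sets_def emeasure_eq_measure)
  qed auto
  have distinct: "AE \<omega> in P. \<forall>i j. i \<noteq> j \<longrightarrow> X i \<omega> \<noteq> X j \<omega>"
    using dist1 by (simp add: AE_all_countable)
  define A where "A j = (\<Union>i\<in>{..<j}. {\<omega>\<in>space P. \<bar>X i \<omega> - X j \<omega>\<bar> < 1 / real j ^ 3})" for j
  have Am[measurable]: "A j \<in> sets P" for j unfolding A_def by measurable
  have Ab: "measure P (A j) \<le> 2 * K * inverse (real j ^ 2)" for j
  proof (cases "j = 0")
    case True then show ?thesis by (simp add: A_def)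
  next
    case False
    have "measure P (A j) \<le> (\<Sum>i<j. measure P {\<omega>\<in>space P. \<bar>X i \<omega> - X j \<omega>\<bar> < 1 / real j ^ 3})"
      unfolding A_def by (intro measure_UNION_le) auto
    also have "\<dots> \<le> (\<Sum>i<j. 2 * K * (1 / real j ^ 3))"
      using False by (intro sum_mono pc) auto
    also have "\<dots> = 2 * K * inverse (real j ^ 2)"
      using False by (simp add: field_simps power3_eq_cube power2_eq_square)
    finally show ?thesis .
  qed
  have summ: "summable (\<lambda>j. measure P (A j))"
  proof (rule summable_comparison_test[where g="\<lambda>j. 2 * K * inverse (real j ^ 2)"])
    show "\<exists>N. \<forall>n\<ge>N. norm (measure P (A n)) \<le> 2 * K * inverse (real n ^ 2)"
      using Ab by auto
    show "summable (\<lambda>j. 2 * K * inverse (real j ^ 2))"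
      by (intro summable_mult inverse_power_summable) auto
  qed
  have BC: "AE \<omega> in P. eventually (\<lambda>j. \<omega> \<in> space P - A j) sequentially"
    by (rule borel_cantelli_AE1) (auto simp: summ emeasure_eq_measure)
  show ?thesis
    using distinct BC
  proof eventually_elim
    case (elim \<omega>)
    then obtain J where J: "\<And>j. j \<ge> J \<Longrightarrow> \<omega> \<in> space P - A j"
      by (auto simp: eventually_sequentially)
    define F where "F = {(i, j). i < j \<and> j < (J::nat)}"
    have fin: "finite F" unfolding F_def by (rule finite_subset[of _ "{..<J} \<times> {..<J}"]) auto
    have ev1: "eventually (\<lambda>n. \<forall>p\<in>F. 1 / real n ^ 3 \<le> \<bar>X (fst p) \<omega> - X (snd p) \<omega>\<bar>) sequentially"
    proof (rule eventually_ball_finite[OF fin], rule ballI)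
      fix p assume "p \<in> F"
      then have "X (fst p) \<omega> \<noteq> X (snd p) \<omega>" using elim(1) by (auto simp: F_def)
      then have pos: "\<bar>X (fst p) \<omega> - X (snd p) \<omega>\<bar> > 0" by simp
      have lim: "(\<lambda>n. 1 / real n ^ 3) \<longlonglongrightarrow> 0"
        by (intro tendsto_divide_0[OF tendsto_const] filterlim_at_top_imp_at_infinity filterlim_pow_at_top filterlim_real_sequentially) auto
      show "eventually (\<lambda>n. 1 / real n ^ 3 \<le> \<bar>X (fst p) \<omega> - X (snd p) \<omega>\<bar>) sequentially"
        using order_tendstoD(2)[OF lim pos] by eventually_elim simp
    qed
    show ?case
      using ev1 eventually_ge_at_top[of J]
    proof eventually_elim
      case (elim n)
      have key: "1 / real n ^ 3 \<le> \<bar>X i \<omega> - X j \<omega>\<bar>" if ij: "i < j" "j < n" for i j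
      proof (cases "j < J")
        case True
        then have "(i, j) \<in> F" using ij by (auto simp: F_def)
        then show ?thesis using elim(1) by fastforce
      next
        case False
        then have "\<omega> \<in> space P - A j" using J[of j] by simp
        then have "1 / real j ^ 3 \<le> \<bar>X i \<omega> - X j \<omega>\<bar>" using ij by (auto simp: A_def not_less)
        moreover have "1 / real n ^ 3 \<le> 1 / real j ^ 3"
          using ij by (intro divide_left_mono power_mono) auto
        ultimately show ?thesis by linarith
      qed
      show ?case
      proof (intro allI impI)
        fix i j assume "i < n" "j < n" "i \<noteq> j"
        then show "1 / real n ^ 3 \<le> \<bar>X i \<omega> - X j \<omega>\<bar>"
          using key[of i j] key[of j i] by (cases "i < j") (auto simp: abs_minus_commute)
      qed
    qed
  qed
qed



lemma asym:
  fixes d d' K0 R :: real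
  assumes d: "0 < d" "d < d'"
  shows "eventually (\<lambda>n. K0 + real n powr d + 6 * ln (real n) - real n powr d' < R) sequentially"
proof -
  have h1: "(\<lambda>n. real n powr (d - d')) \<longlonglongrightarrow> 0"
    using d by (intro tendsto_neg_powr filterlim_real_sequentially) auto
  have h2: "(\<lambda>n. ln (real n) / real n powr d') \<longlonglongrightarrow> 0"
    using d by (intro lim_ln_over_power) auto
  have h3': "(\<lambda>n. real n powr (- d')) \<longlonglongrightarrow> 0"
    using d by (intro tendsto_neg_powr filterlim_real_sequentially) auto
  have e1: "eventually (\<lambda>n. real n powr (d - d') < 1/4) sequentially"
    using order_tendstoD(2)[OF h1, of "1/4"] by simp
  have e2: "eventually (\<lambda>n. ln (real n) / real n powr d' < 1/24) sequentially"
    using order_tendstoD(2)[OF h2, of "1/24"] by simp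
  have e3: "eventually (\<lambda>n. real n powr d' > 2 * (K0 - R)) sequentially"
  proof -
    define c where "c = max 1 (2 * (K0 - R))"
    have c0: "c > 0" by (simp add: c_def)
    have "eventually (\<lambda>n. real n powr (- d') < 1 / c) sequentially"
      using order_tendstoD(2)[OF h3', of "1/c"] c0 by simp
    then show ?thesis using eventually_ge_at_top[of 1]
    proof eventually_elim
      case (elim n)
      have p: "real n powr d' > 0" using elim(2) by simp
      have "inverse (real n powr d') < 1 / c" using elim(1) by (simp add: powr_minus)
      then have "c < real n powr d'" using p c0 by (simp add: field_simps)
      then show ?case by (simp add: c_def)
    qed
  qed
  show ?thesis
    using e1 e2 e3 eventually_ge_at_top[of 1]
  proof eventually_elim
    case (elim n)
    have np: "real n > 0" using elim(4) by simp
    have pp: "real n powr d' > 0" using np by simp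
    have "real n powr d = real n powr (d - d') * real n powr d'"
      using np by (simp add: powr_add[symmetric])
    also have "\<dots> \<le> 1/4 * real n powr d'"
      using elim(1) pp by (intro mult_right_mono) auto
    finally have a: "real n powr d \<le> 1/4 * real n powr d'" .
    have "ln (real n) < 1/24 * real n powr d'"
      using elim(2) pp by (simp add: divide_less_eq)
    then show ?case using a elim(3) by argo
  qed
qed



lemma comp_far:
  fixes g :: "real \<Rightarrow> real"
  assumes gv0: "\<And>x. g x \<le> v0" and gtail: "\<And>x. x \<noteq> 0 \<Longrightarrow> g x \<le> v1 * \<bar>x\<bar> powr (-\<beta>)"
    and \<beta>: "\<beta> > 2" and v: "v0 > 0" "v1 > 0" and \<sigma>: "\<sigma> > 0" and r: "r > 0"
    and far: "\<bar>x - \<mu>\<bar> \<ge> r"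
  shows "(1/\<sigma>) * g ((x-\<mu>)/\<sigma>) \<le> (v0+v1) * \<sigma> / r^2"
proof (cases "\<bar>(x-\<mu>)/\<sigma>\<bar> \<ge> 1")
  case True
  define z where "z = (x-\<mu>)/\<sigma>"
  have z1: "\<bar>z\<bar> \<ge> 1" using True by (simp add: z_def)
  then have zn: "z \<noteq> 0" by auto
  have "g z \<le> v1 * \<bar>z\<bar> powr (-\<beta>)" using gtail zn by simp
  also have "\<dots> \<le> v1 * \<bar>z\<bar> powr (-2)"
    using z1 \<beta> v by (intro mult_left_mono powr_mono) auto
  also have "\<bar>z\<bar> powr (-2) = 1 / z^2"
    using zn by (simp add: powr_minus powr_numeral divide_inverse)
  also have "1 / z^2 = \<sigma>^2 / (x-\<mu>)^2"
    using \<sigma> by (simp add: z_def power_divide)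
  also have "\<sigma>^2 / (x-\<mu>)^2 \<le> \<sigma>^2 / r^2"
  proof -
    have "r^2 \<le> (x-\<mu>)^2" using far r
      by (metis abs_ge_zero abs_of_pos power2_abs power_mono)
    moreover have "r^2 > 0" using r by simp
    ultimately show ?thesis using r \<sigma> by (intro divide_left_mono mult_pos_pos) auto
  qed
  finally have gz: "g z \<le> v1 * (\<sigma>^2 / r^2)" using v by simp
  have "(1/\<sigma>) * g z \<le> (1/\<sigma>) * (v1 * (\<sigma>^2 / r^2))"
    using gz \<sigma> by (intro mult_left_mono) auto
  also have "\<dots> = v1 * \<sigma> / r^2" using \<sigma> by (simp add: power2_eq_square)
  also have "\<dots> \<le> (v0+v1) * \<sigma> / r^2"
    using v \<sigma> r by (intro divide_right_mono mult_right_mono) auto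
  finally show ?thesis by (simp add: z_def)
next
  case False
  then have "\<bar>x - \<mu>\<bar> < \<sigma>" using \<sigma> by (simp add: abs_divide)
  then have rs: "r < \<sigma>" using far by linarith
  have "(1/\<sigma>) * g ((x-\<mu>)/\<sigma>) \<le> (1/\<sigma>) * v0"
    using gv0 \<sigma> by (intro mult_left_mono) auto
  also have "\<dots> = v0 / \<sigma>" by simp
  also have "\<dots> \<le> v0 * \<sigma> / r^2"
  proof -
    have "r^2 \<le> \<sigma>^2" using rs r by (intro power_mono) auto
    then have "1 / \<sigma> \<le> \<sigma> / r^2" using r \<sigma> by (simp add: field_simps power2_eq_square)
    then show ?thesis using v by (simp add: mult_left_mono divide_inverse)
  qed
  also have "\<dots> \<le> (v0+v1) * \<sigma> / r^2"
    using v \<sigma> r by (intro divide_right_mono mult_right_mono) auto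
  finally show ?thesis .
qed

lemma mix_bound:
  assumes th: "(\<alpha>, \<mu>, \<sigma>) \<in> Theta M"
    and b: "\<And>m. m < M \<Longrightarrow> (1 / \<sigma> m) * g m ((x - \<mu> m) / \<sigma> m) \<le> C"
  shows "mixdens M g (\<alpha>, \<mu>, \<sigma>) x \<le> C"
proof -
  have a: "\<forall>m<M. \<alpha> m \<ge> 0" and s: "(\<Sum>m<M. \<alpha> m) = 1" using th by (auto simp: Theta_def)
  have "mixdens M g (\<alpha>, \<mu>, \<sigma>) x \<le> (\<Sum>m<M. \<alpha> m * C)"
    unfolding mixdens_def using a b by (auto intro!: sum_mono mult_left_mono simp del: times_divide_eq_right)
  also have "\<dots> = C" using s by (simp add: sum_distrib_right[symmetric])
  finally show ?thesis .
qed



lemma det_n: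
  fixes M n :: nat and g :: "nat \<Rightarrow> real \<Rightarrow> real" and xs :: "nat \<Rightarrow> real"
  assumes gv0: "\<And>m x. m < M \<Longrightarrow> g m x \<le> v0"
    and gtail: "\<And>m x. m < M \<Longrightarrow> x \<noteq> 0 \<Longrightarrow> g m x \<le> v1 * \<bar>x\<bar> powr (-\<beta>)"
    and \<beta>: "\<beta> > 2" and v: "v0 > 0" "v1 > 0"
    and d: "0 < d"
    and n: "n \<ge> 2 * M" "n \<ge> 1" and dn: "real n powr d' \<le> real n"
    and sp: "\<And>i j. i < n \<Longrightarrow> j < n \<Longrightarrow> i \<noteq> j \<Longrightarrow> 1 / real n ^ 3 \<le> \<bar>xs i - xs j\<bar>"
    and th: "\<theta> \<in> Theta_b M (exp (- (real n powr d))) \<inter> (Theta M - Theta_c M (exp (- (real n powr d'))))"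
  shows "avg_loglik M g \<theta> xs n \<le> ereal (ln (v0+v1) + real n powr d + 2 * ln 2 + 6 * ln (real n)
      + real M * (\<bar>ln v0\<bar> + \<bar>ln (v0+v1)\<bar>) + 2 * real M - real n powr d')"
proof -
  obtain \<alpha> \<mu> \<sigma> where \<theta>: "\<theta> = (\<alpha>, \<mu>, \<sigma>)" by (cases \<theta>) auto
  define b where "b = exp (- (real n powr d))"
  define c where "c = exp (- (real n powr d'))"
  have thT: "(\<alpha>, \<mu>, \<sigma>) \<in> Theta M" using th by (auto simp: \<theta> Theta_b_def)
  have ratio: "\<And>m m'. m < M \<Longrightarrow> m' < M \<Longrightarrow> m \<noteq> m' \<Longrightarrow> \<sigma> m / \<sigma> m' \<ge> b"
    using th by (auto simp: \<theta> Theta_b_def b_def)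
  obtain m0 where m0: "m0 < M" "\<sigma> m0 < c"
    using th by (auto simp: \<theta> Theta_c_def c_def not_le)
  have spos: "\<And>m. m < M \<Longrightarrow> \<sigma> m > 0" using thT by (auto simp: Theta_def)
  define s where "s = \<sigma> m0"
  have s0: "s > 0" using spos m0 by (simp add: s_def)
  have b0: "b > 0" and b1: "b \<le> 1" by (auto simp: b_def)
  have sig: "b * s \<le> \<sigma> m \<and> \<sigma> m \<le> s / b" if m: "m < M" for m
  proof (cases "m = m0")
    case True
    then show ?thesis using b0 b1 s0 by (auto simp: s_def field_simps mult_le_cancel_right1)
  next
    case False
    have "\<sigma> m / \<sigma> m0 \<ge> b" using ratio[OF m m0(1) False] .
    then have 1: "b * s \<le> \<sigma> m" using spos[OF m0(1)] by (simp add: s_def field_simps)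
    have "\<sigma> m0 / \<sigma> m \<ge> b" using ratio[OF m0(1) m] False by auto
    then have "b * \<sigma> m \<le> s" using spos[OF m] by (simp add: s_def field_simps)
    then have 2: "\<sigma> m \<le> s / b" using b0 by (simp add: field_simps)
    show ?thesis using 1 2 by simp
  qed
  have close: "mixdens M g (\<alpha>, \<mu>, \<sigma>) x \<le> v0 / (b * s)" for x
  proof (rule mix_bound[OF thT])
    fix m assume m: "m < M"
    have "(1 / \<sigma> m) * g m ((x - \<mu> m) / \<sigma> m) \<le> (1 / \<sigma> m) * v0"
      using spos[OF m] gv0[OF m] by (intro mult_left_mono) auto
    also have "\<dots> = v0 / \<sigma> m" by simp
    also have "\<dots> \<le> v0 / (b * s)"
      using sig[OF m] b0 s0 v spos[OF m] by (intro divide_left_mono) auto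
    finally show "(1 / \<sigma> m) * g m ((x - \<mu> m) / \<sigma> m) \<le> v0 / (b * s)" .
  qed
  define r where "r = 1 / (2 * real n ^ 3)"
  have r0: "r > 0" using n by (simp add: r_def)
  have far: "mixdens M g (\<alpha>, \<mu>, \<sigma>) x \<le> (v0+v1) * (s / b) / r^2"
    if fx: "\<And>m. m < M \<Longrightarrow> \<bar>x - \<mu> m\<bar> \<ge> r" for x
  proof (rule mix_bound[OF thT])
    fix m assume m: "m < M"
    have "(1 / \<sigma> m) * g m ((x - \<mu> m) / \<sigma> m) \<le> (v0+v1) * \<sigma> m / r^2"
      by (rule comp_far[OF gv0[OF m] gtail[OF m] \<beta> v spos[OF m] r0 fx[OF m]])
    also have "\<dots> \<le> (v0+v1) * (s / b) / r^2"
      using sig[OF m] v r0 by (intro divide_right_mono mult_left_mono) auto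
    finally show "(1 / \<sigma> m) * g m ((x - \<mu> m) / \<sigma> m) \<le> (v0+v1) * (s / b) / r^2" .
  qed
  show ?thesis
  proof (cases "\<forall>i<n. mixdens M g \<theta> (xs i) > 0")
    case False
    then show ?thesis unfolding avg_loglik_def by (simp only: if_False) simp
  next
    case True
    define f where "f i = mixdens M g (\<alpha>, \<mu>, \<sigma>) (xs i)" for i
    have fpos: "i < n \<Longrightarrow> f i > 0" for i using True by (simp add: f_def \<theta>)
    define Pn where "Pn = ln (v0 / (b * s))"
    define Qn where "Qn = ln ((v0+v1) * (s / b) / r^2)"
    define Q' where "Q' = min Pn Qn"
    define C where "C = {i\<in>{..<n}. \<exists>m<M. \<bar>xs i - \<mu> m\<bar> < r}"
    have Cn: "C \<subseteq> {..<n}" by (auto simp: C_def)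
    have lnP: "ln (f i) \<le> Pn" if "i < n" for i
      unfolding Pn_def f_def using fpos[OF that] close
      using v b0 s0 by (subst ln_le_cancel_iff) (auto simp: f_def)
    have lnQ: "ln (f i) \<le> Qn" if "i < n" "i \<notin> C" for i
    proof -
      have "\<And>m. m < M \<Longrightarrow> \<bar>xs i - \<mu> m\<bar> \<ge> r" using that unfolding C_def by (metis (mono_tags, lifting) lessThan_iff mem_Collect_eq not_less)
      then have "f i \<le> (v0+v1) * (s / b) / r^2" unfolding f_def by (rule far)
      then show ?thesis unfolding Qn_def using fpos[OF that(1)] by (subst ln_le_cancel_iff) auto
    qed
    have cardC: "card C \<le> M"
    proof -
      define h where "h i = (SOME m. m < M \<and> \<bar>xs i - \<mu> m\<bar> < r)" for i
      have h: "h i < M \<and> \<bar>xs i - \<mu> (h i)\<bar> < r" if "i \<in> C" for i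
      proof -
        have "\<exists>m. m < M \<and> \<bar>xs i - \<mu> m\<bar> < r" using that by (auto simp: C_def)
        then show ?thesis unfolding h_def by (rule someI_ex)
      qed
      have "inj_on h C"
      proof (rule inj_onI, rule ccontr)
        fix i j assume ij: "i \<in> C" "j \<in> C" "h i = h j" "i \<noteq> j"
        have a: "\<bar>xs j - \<mu> (h i)\<bar> < r" using h[OF ij(2)] ij(3) by simp
        have "\<bar>xs i - xs j\<bar> < 2 * r" using h[OF ij(1)] a by linarith
        also have "2 * r = 1 / real n ^ 3" by (simp add: r_def)
        finally show False using sp[of i j] ij Cn by auto
      qed
      moreover have "h ` C \<subseteq> {..<M}" using h by auto
      ultimately show ?thesis using card_inj_on_le[of h C "{..<M}"] by simp
    qed
    have "(\<Sum>i<n. ln (f i)) \<le> (\<Sum>i<n. if i \<in> C then Pn else Q')"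
      using lnP lnQ by (intro sum_mono) (auto simp: Q'_def)
    also have "\<dots> = real (card C) * Pn + (real n - real (card C)) * Q'"
    proof -
      have "(\<Sum>i<n. if i \<in> C then Pn else Q') = (\<Sum>i\<in>{..<n} \<inter> C. Pn) + (\<Sum>i\<in>{..<n} - C. Q')"
        by (subst sum.If_cases) (auto simp: Diff_eq)
      also have "{..<n} \<inter> C = C" using Cn by auto
      also have "card ({..<n} - C) = n - card C" using Cn by (simp add: card_Diff_subset finite_subset)
      ultimately show ?thesis using Cn card_mono[OF _ Cn] by (simp add: of_nat_diff)
    qed
    also have "\<dots> \<le> real M * Pn + (real n - real M) * Qn"
    proof -
      have "real (card C) * Pn + (real n - real (card C)) * Q' = real n * Q' + real (card C) * (Pn - Q')"
        by (simp add: algebra_simps)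
      also have "\<dots> \<le> real n * Q' + real M * (Pn - Q')"
        using cardC by (intro add_left_mono mult_right_mono) (auto simp: Q'_def)
      also have "\<dots> = real M * Pn + (real n - real M) * Q'" by (simp add: algebra_simps)
      also have "\<dots> \<le> real M * Pn + (real n - real M) * Qn"
        using n by (intro add_left_mono mult_left_mono) (auto simp: Q'_def)
      finally show ?thesis .
    qed
    finally have S1: "(\<Sum>i<n. ln (f i)) \<le> real M * Pn + (real n - real M) * Qn" .
    define t where "t = - ln s"
    have lnb: "ln b = - (real n powr d)" by (simp add: b_def)
    have tb: "t > real n powr d'"
    proof -
      have "s < c" using m0 by (simp add: s_def)
      then have "ln s < ln c" using s0 by simp
      then show ?thesis by (simp add: t_def c_def)
    qed
    have Pn_eq: "Pn = ln v0 + real n powr d + t"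
      using v b0 s0 by (simp add: Pn_def t_def lnb ln_div ln_mult)
    have lnr: "ln r = - (ln 2 + 3 * ln (real n))"
      using n by (simp add: r_def ln_div ln_mult ln_realpow)
    have Qn_eq: "Qn = ln (v0+v1) + real n powr d + 2 * ln 2 + 6 * ln (real n) - t"
      using v b0 s0 r0 by (simp add: Qn_def t_def lnb ln_div ln_mult ln_realpow lnr)
    define L where "L = ln (v0+v1) + real n powr d + 2 * ln 2 + 6 * ln (real n)"
    define C0 where "C0 = \<bar>ln v0\<bar> + \<bar>ln (v0+v1)\<bar>"
    have lnn: "ln (real n) \<ge> 0" using n by simp
    have S2: "real M * Pn + (real n - real M) * Qn
        = real M * ln v0 + real M * (real n powr d) - real M * L + real n * L - (real n - 2 * real M) * t"
      by (simp add: Pn_eq Qn_eq L_def algebra_simps)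
    have i1: "real M * ln v0 \<le> real M * \<bar>ln v0\<bar>" by (intro mult_left_mono) auto
    have i2: "real M * (real n powr d) - real M * L \<le> real M * \<bar>ln (v0+v1)\<bar>"
    proof -
      have "real M * (real n powr d) - real M * L = real M * (- ln (v0+v1) - 2 * ln 2 - 6 * ln (real n))"
        by (simp add: L_def algebra_simps)
      also have "\<dots> \<le> real M * \<bar>ln (v0+v1)\<bar>" 
      proof (intro mult_left_mono)
        have "ln (2::real) > 0" by simp
        then show "- ln (v0+v1) - 2 * ln 2 - 6 * ln (real n) \<le> \<bar>ln (v0+v1)\<bar>" using lnn by linarith
      qed simp
      finally show ?thesis .
    qed
    have i3: "(real n - 2 * real M) * t \<ge> (real n - 2 * real M) * real n powr d'"
      using n tb by (intro mult_left_mono) auto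
    have i4: "real M * C0 \<le> real n * (real M * C0)"
    proof -
      have c0: "0 \<le> real M * C0" by (simp add: C0_def)
      show ?thesis using mult_right_mono[OF _ c0, of 1 "real n"] n by simp
    qed
    have i5: "2 * real M * real n powr d' \<le> 2 * real M * real n" using dn by (intro mult_left_mono) auto
    have S3: "(\<Sum>i<n. ln (f i)) \<le> real n * (L + real M * C0 + 2 * real M - real n powr d')"
    proof -
      have "(\<Sum>i<n. ln (f i)) \<le> real M * C0 + real n * L - (real n - 2 * real M) * real n powr d'"
        using S1 S2 i1 i2 i3 unfolding C0_def by (simp add: algebra_simps)
      also have "\<dots> \<le> real n * (L + real M * C0 + 2 * real M - real n powr d')"
        using i4 i5 by (simp add: algebra_simps)
      finally show ?thesis .
    qed
    have "avg_loglik M g \<theta> xs n = ereal ((\<Sum>i<n. ln (f i)) / real n)"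
      using True by (simp add: avg_loglik_def f_def \<theta>)
    also have "(\<Sum>i<n. ln (f i)) / real n \<le> L + real M * C0 + 2 * real M - real n powr d'"
      using S3 n by (simp add: divide_le_eq mult.commute)
    finally show ?thesis by (simp add: L_def C0_def)
  qed
qed



theorem mainTheorem6:
  fixes M :: nat and g :: "nat \<Rightarrow> real \<Rightarrow> real"
    and v0 v1 \<beta> d d' :: real
    and P :: "'w measure" and X :: "nat \<Rightarrow> 'w \<Rightarrow> real"
    and \<theta>0 :: "(nat \<Rightarrow> real) \<times> (nat \<Rightarrow> real) \<times> (nat \<Rightarrow> real)"
  assumes M_pos: "M \<ge> 1"
    and g_meas: "\<And>m. m < M \<Longrightarrow> g m \<in> borel_measurable lborel"
    and g_nonneg: "\<And>m x. m < M \<Longrightarrow> g m x \<ge> 0"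
    and g_dens: "\<And>m. m < M \<Longrightarrow> (g m has_integral 1) UNIV"
    and A5: "v0 > 0" "v1 > 0" "\<beta> > 2"
      "\<And>m x. m < M \<Longrightarrow> g m x \<le> v0"
      "\<And>m x. m < M \<Longrightarrow> x \<noteq> 0 \<Longrightarrow> g m x \<le> v1 * \<bar>x\<bar> powr (-\<beta>)"
    and d: "0 < d" "d < d'" "d' < 1"
    and P: "prob_space P"
    and indep: "prob_space.indep_vars P (\<lambda>_. borel) X UNIV"
    and \<theta>0: "\<theta>0 \<in> Theta M"
    and distr: "\<And>i. distributed P lborel (X i) (\<lambda>x. ennreal (mixdens M g \<theta>0 x))"
  shows "AE \<omega> in P.
    ((\<lambda>n. SUP \<theta> \<in> Theta_b M (exp (- (real n powr d))) \<inter>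
                   (Theta M - Theta_c M (exp (- (real n powr d')))).
             avg_loglik M g \<theta> (\<lambda>i. X i \<omega>) n)
      \<longlongrightarrow> (-\<infinity> :: ereal)) sequentially"
proof -
  obtain \<alpha>0 \<mu>0 \<sigma>0 where t0: "\<theta>0 = (\<alpha>0, \<mu>0, \<sigma>0)" by (cases \<theta>0) auto
  have s0: "\<And>m. m < M \<Longrightarrow> \<sigma>0 m > 0" using \<theta>0 by (auto simp: t0 Theta_def)
  define K where "K = (\<Sum>m<M. v0 / \<sigma>0 m)"
  have K0: "K \<ge> 0" unfolding K_def using s0 A5(1) by (intro sum_nonneg) (auto intro: less_imp_le)
  have fK: "mixdens M g \<theta>0 x \<le> K" for x
    unfolding t0
  proof (rule mix_bound[OF \<theta>0[unfolded t0]])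
    fix m assume m: "m < M"
    have "(1 / \<sigma>0 m) * g m ((x - \<mu>0 m) / \<sigma>0 m) \<le> (1 / \<sigma>0 m) * v0"
      using s0[OF m] A5(4)[OF m] by (intro mult_left_mono) auto
    also have "\<dots> = v0 / \<sigma>0 m" by simp
    also have "\<dots> \<le> K" unfolding K_def
      using m s0 A5(1) by (intro member_le_sum) (auto intro: less_imp_le)
    finally show "(1 / \<sigma>0 m) * g m ((x - \<mu>0 m) / \<sigma>0 m) \<le> K" .
  qed
  have sp: "AE \<omega> in P. eventually (\<lambda>n. \<forall>i<n. \<forall>j<n. i \<noteq> j \<longrightarrow> 1 / real n ^ 3 \<le> \<bar>X i \<omega> - X j \<omega>\<bar>) sequentially"
    by (rule spacing[OF P indep distr fK K0])
  show ?thesis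
    using sp
  proof eventually_elim
    case (elim \<omega>)
    define K1 where "K1 = ln (v0+v1) + 2 * ln 2 + real M * (\<bar>ln v0\<bar> + \<bar>ln (v0+v1)\<bar>) + 2 * real M"
    show ?case
    proof (unfold tendsto_MInfty, intro allI)
      fix R :: real
      show "eventually (\<lambda>n. (SUP \<theta> \<in> Theta_b M (exp (- (real n powr d))) \<inter>
                   (Theta M - Theta_c M (exp (- (real n powr d')))).
             avg_loglik M g \<theta> (\<lambda>i. X i \<omega>) n) < ereal R) sequentially"
        using elim asym[OF d(1,2), of K1 R] eventually_ge_at_top[of "2 * M"] eventually_ge_at_top[of 1]
      proof eventually_elim
        case (elim n)
        have dn: "real n powr d' \<le> real n"
        proof -
          have "real n powr d' \<le> real n powr 1"
            using elim(4) d by (intro powr_mono) auto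
          then show ?thesis using elim(4) by simp
        qed
        have "(SUP \<theta> \<in> Theta_b M (exp (- (real n powr d))) \<inter>
                   (Theta M - Theta_c M (exp (- (real n powr d')))).
             avg_loglik M g \<theta> (\<lambda>i. X i \<omega>) n) \<le> ereal (ln (v0+v1) + real n powr d + 2 * ln 2 + 6 * ln (real n)
      + real M * (\<bar>ln v0\<bar> + \<bar>ln (v0+v1)\<bar>) + 2 * real M - real n powr d')"
        proof (rule SUP_least)
          fix \<theta> assume th: "\<theta> \<in> Theta_b M (exp (- (real n powr d))) \<inter> (Theta M - Theta_c M (exp (- (real n powr d'))))"
          show "avg_loglik M g \<theta> (\<lambda>i. X i \<omega>) n \<le> ereal (ln (v0+v1) + real n powr d + 2 * ln 2 + 6 * ln (real n)
      + real M * (\<bar>ln v0\<bar> + \<bar>ln (v0+v1)\<bar>) + 2 * real M - real n powr d')"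
            by (rule det_n[OF A5(4,5,3,1,2) d(1) elim(3,4) dn _ th]) (use elim(1) in auto)
        qed
        also have "\<dots> < ereal R" using elim(2) by (simp add: K1_def)
        finally show ?case .
      qed
    qed
  qed
qed

end
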